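(* Let $A\in\mathbb{R}^{n\times n}$ and $C_i\in\mathbb{R}^{m_i\times n}$, $i\in\mathcal{N}=\{1,\dots,N\}$, and let $q\ge 0$ be an integer. Assume: (i) ($2q$-redundant observability) for every $\mathcal{N}'\subset\mathcal{N}$ with $|\mathcal{N}'|=N-2q$, the pair $(C',A)$ is observable, where $C'$ is the matrix obtained by stacking the $C_i$, $i\in\mathcal{N}'$; (ii) there exists a basis $\{v_1,\dots,v_n\}$ of $\mathbb{R}^n$ such that, for every $i\in\mathcal{N}$, the unobservable subspace $\mathcal{U}_i$ of the pair $(C_i,A)$ is the span of a subset of $\{v_1,\dots,v_n\}$. For such a basis define, for $i\in\mathcal{N}$ and $l\in\{1,\dots,n\}$, $s_i^l=1$ if $v_l\notin\mathcal{U}_i$ and $s_i^l=0$ if $v_l\in\mathcal{U}_i$. Then, for each $l=1,\dots,n$, $$|\{ i \in \mathcal{N} : s_i^l = 1 \}| \ge 2q+1.$$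
   Context: $\mathcal{U}_i$ denotes the unobservable subspace of $(C_i,A)$, i.e., the kernel of the observability matrix $\mathrm{col}(C_i, C_iA,\dots,C_iA^{n-1})$. $|\cdot|$ denotes cardinality. *)

theory Defs
  imports "HOL-Analysis.Analysis"
begin

text \<open>An output matrix C with m rows is represented by the list of its m row vectors.
  The unobservable subspace of (C, A) is the kernel of the observability matrix
  col(C, C A, ..., C A^(n-1)), n = CARD('n): the vectors x with r . (A^k x) = 0
  for every row r of C and every k < n.\<close>

definition unobs_sub :: "real^'n^'n \<Rightarrow> (real^'n) list \<Rightarrow> (real^'n) set" where
  "unobs_sub A C = {x. \<forall>r\<in>set C. \<forall>k<CARD('n). r \<bullet> (((\<lambda>y. A *v y) ^^ k) x) = 0}"

definition observable :: "real^'n^'n \<Rightarrow> (real^'n) list \<Rightarrow> bool" where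
  "observable A C \<longleftrightarrow> unobs_sub A C = {0}"

definition stack :: "(nat \<Rightarrow> (real^'n) list) \<Rightarrow> nat set \<Rightarrow> (real^'n) list" where
  "stack C S = concat (map C (sorted_list_of_set S))"

end

theory Submission
  imports Defs
begin

theorem lemma1:
  fixes A :: "real^'n^'n"
    and C :: "nat \<Rightarrow> (real^'n) list"
    and N q :: nat
    and v :: "nat \<Rightarrow> real^'n"
  assumes Nq: "2 * q \<le> N"
    and red_obs: "\<And>N'. N' \<subseteq> {1..N} \<Longrightarrow> card N' = N - 2 * q \<Longrightarrow> observable A (stack C N')"
    and basis_inj: "inj_on v {1..CARD('n)}"
    and basis_indep: "independent (v ` {1..CARD('n)})"
    and basis_span: "span (v ` {1..CARD('n)}) = UNIV"
    and unobs_span: "\<forall>i\<in>{1..N}. \<exists>L\<subseteq>{1..CARD('n)}. unobs_sub A (C i) = span (v ` L)"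
  shows "\<forall>l\<in>{1..CARD('n)}. card {i\<in>{1..N}. v l \<notin> unobs_sub A (C i)} \<ge> 2 * q + 1"
proof
  fix l assume l: "l \<in> {1..CARD('n)}"
  define S where "S = {i\<in>{1..N}. v l \<notin> unobs_sub A (C i)}"
  show "card S \<ge> 2 * q + 1"
  proof (rule ccontr)
    assume "\<not> card S \<ge> 2 * q + 1"
    hence cS: "card S \<le> 2 * q" by simp
    define T where "T = {1..N} - S"
    have fS: "finite S" unfolding S_def by simp
    have "S \<subseteq> {1..N}" unfolding S_def by auto
    hence "card T = N - card S" unfolding T_def using fS by (simp add: card_Diff_subset)
    hence "N - 2 * q \<le> card T" using cS by simp
    then obtain N' where N': "N' \<subseteq> T" "card N' = N - 2 * q"
      using obtain_subset_with_card_n by metis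
    have sub: "N' \<subseteq> {1..N}" using N' unfolding T_def by auto
    have fN: "finite N'" using sub finite_subset by blast
    have inU: "\<And>i. i \<in> N' \<Longrightarrow> v l \<in> unobs_sub A (C i)"
      using N' unfolding T_def S_def by auto
    have setst: "set (stack C N') = (\<Union>i\<in>N'. set (C i))"
      unfolding stack_def using fN by auto
    have "v l \<in> unobs_sub A (stack C N')"
      using inU unfolding unobs_sub_def setst by blast
    hence "v l = 0" using red_obs[OF sub N'(2)] unfolding observable_def by blast
    moreover have "v l \<in> v ` {1..CARD('n)}" using l by blast
    ultimately show False using basis_indep dependent_zero by metis
  qed
qed

end
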